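(* Let $N\ge 2$ be an integer and $\tau>0$. For $t\in\{0,\tau,2\tau,\dots\}$ let $u_j^t=u(j,t)$, $j=0,\dots,N$, be defined by prescribed initial values $u(j,0)$ with $0\le u(j,0)\le 1$ for $j=0,\dots,N$, the Dirichlet boundary condition $u_0^t=u_N^t=0$ for all $t$, and the iteration, for $j=1,\dots,N-1$, $$u_j^{t+\tau}=u_j^t+\frac{u_j^tu_{j-1}^t}{2}\bigl(u_j^t+u_{j-1}^t-1\bigr)\bigl(u_{j-1}^t-u_j^t\bigr)+\frac{u_j^tu_{j+1}^t}{2}\bigl(u_j^t+u_{j+1}^t-1\bigr)\bigl(u_{j+1}^t-u_j^t\bigr).$$ Then the total density is conserved: for every $t\in\{0,\tau,2\tau,\dots\}$, $$\sum_{j=1}^{N-1}u(j,t+\tau)=\sum_{j=1}^{N-1}u(j,t).$$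
   Context: This is an aggregation–diffusion lattice model for a cell density on the grid points $x_j=j/N$; $\tau$ is the time step. *)

theory Defs
  imports Complex_Main
begin

end

theory Submission
  imports Defs
begin

lemma alg: fixes a b c :: real shows
 "a + a * b / 2 * (a + b - 1) * (b - a) + a * c / 2 * (a + c - 1) * (c - a)
  = a + (a * c / 2 * (a + c - 1) * (c - a) - b * a / 2 * (b + a - 1) * (a - b))"
  by (simp add: field_simps)

lemma tele: fixes m :: nat shows "(\<Sum>j = 1..m. (F j - F (j - 1))) = F m - (F 0 :: real)"
  by (induction m) auto

theorem theorem3p2:
  fixes N :: nat and \<tau> :: real and u :: "nat \<Rightarrow> real \<Rightarrow> real"
  assumes "N \<ge> 2" and "\<tau> > 0"
    and init: "\<And>j. j \<le> N \<Longrightarrow> 0 \<le> u j 0 \<and> u j 0 \<le> 1"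
    and bc0: "\<And>k::nat. u 0 (real k * \<tau>) = 0"
    and bcN: "\<And>k::nat. u N (real k * \<tau>) = 0"
    and step: "\<And>(k::nat) j. 1 \<le> j \<Longrightarrow> j \<le> N - 1 \<Longrightarrow>
      (let t = real k * \<tau> in
        u j (t + \<tau>) = u j t
          + u j t * u (j - 1) t / 2 * (u j t + u (j - 1) t - 1) * (u (j - 1) t - u j t)
          + u j t * u (j + 1) t / 2 * (u j t + u (j + 1) t - 1) * (u (j + 1) t - u j t))"
  shows "\<forall>k::nat. (\<Sum>j = 1..N - 1. u j (real k * \<tau> + \<tau>)) = (\<Sum>j = 1..N - 1. u j (real k * \<tau>))"
  proof
  fix k :: nat
  define t where "t = real k * \<tau>"
  define F where "F j = u j t * u (j + 1) t / 2 * (u j t + u (j + 1) t - 1) * (u (j + 1) t - u j t)" for j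
  have e: "u j (t + \<tau>) = u j t + (F j - F (j - 1))" if "j \<in> {1..N - 1}" for j
  proof -
    have j1: "j - 1 + 1 = j" using that by auto
    have Fm: "F (j - 1) = u (j - 1) t * u j t / 2 * (u (j - 1) t + u j t - 1) * (u j t - u (j - 1) t)"
      unfolding F_def j1 ..
    have s: "u j (t + \<tau>) = u j t
          + u j t * u (j - 1) t / 2 * (u j t + u (j - 1) t - 1) * (u (j - 1) t - u j t)
          + u j t * u (j + 1) t / 2 * (u j t + u (j + 1) t - 1) * (u (j + 1) t - u j t)"
      using step[of j k] that unfolding t_def Let_def by auto
    show ?thesis unfolding s Fm unfolding F_def
      by (rule alg)
  qed
  have "(\<Sum>j = 1..N - 1. u j (t + \<tau>)) = (\<Sum>j = 1..N - 1. u j t) + (\<Sum>j = 1..N - 1. (F j - F (j - 1)))"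
    using e by (simp add: sum.distrib)
  also have "(\<Sum>j = 1..N - 1. (F j - F (j - 1))) = F (N - 1) - F 0" by (rule tele)
  also have "F (N - 1) = 0" using bcN[of k] assms(1) unfolding F_def t_def
    by (subgoal_tac "N - 1 + 1 = N") auto
  also have "F 0 = 0" using bc0[of k] unfolding F_def t_def by simp
  finally show "(\<Sum>j = 1..N - 1. u j (real k * \<tau> + \<tau>)) = (\<Sum>j = 1..N - 1. u j (real k * \<tau>))"
    unfolding t_def by simp
qed

end
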